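(* Let $L$ be a distributive lattice, $n\ge1$, $a_i,b_i\in L$ with $a_i<b_i$ for $i\in[n]$, $\widehat{\mathbf e}_I\in L^n$ ($I\subseteq[n]$) the tuple with $i$-th component $b_i$ if $i\in I$ and $a_i$ otherwise, $D=\{\widehat{\mathbf e}_I:I\subseteq[n]\}$, and $f\colon D\to L$. If there is a lattice polynomial function $p\colon L^n\to L$ with $p|_D=f$, then $f$ is monotone and satisfies $$f(\widehat{\mathbf e}_{I\cup\{k\}})\wedge a_k\le f(\widehat{\mathbf e}_I)\le f(\widehat{\mathbf e}_{I\setminus\{k\}})\vee b_k\quad\text{for all } I\subseteq[n],\ k\in[n].$$
   Context: A lattice polynomial function is a composition of $\wedge$, $\vee$, projections and constants from $L$. $f$ monotone means $I\subseteq J\Rightarrow f(\widehat{\mathbf e}_I)\le f(\widehat{\mathbf e}_J)$. *)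

theory Defs
  imports Main
begin

text \<open>Tuples in L^n are represented as functions nat \<Rightarrow> 'a, with only the
components indexed by [n] = {1..n} relevant.\<close>

inductive_set lattice_poly :: "nat \<Rightarrow> ((nat \<Rightarrow> 'a::distrib_lattice) \<Rightarrow> 'a) set"
  for n :: nat where
  proj: "i \<in> {1..n} \<Longrightarrow> (\<lambda>x. x i) \<in> lattice_poly n"
| const: "(\<lambda>x. c) \<in> lattice_poly n"
| inf: "p \<in> lattice_poly n \<Longrightarrow> q \<in> lattice_poly n \<Longrightarrow> (\<lambda>x. inf (p x) (q x)) \<in> lattice_poly n"
| sup: "p \<in> lattice_poly n \<Longrightarrow> q \<in> lattice_poly n \<Longrightarrow> (\<lambda>x. sup (p x) (q x)) \<in> lattice_poly n"

definition ehat :: "(nat \<Rightarrow> 'a) \<Rightarrow> (nat \<Rightarrow> 'a) \<Rightarrow> nat set \<Rightarrow> nat \<Rightarrow> 'a" where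
  "ehat a b I = (\<lambda>i. if i \<in> I then b i else a i)"

definition Dset :: "nat \<Rightarrow> (nat \<Rightarrow> 'a) \<Rightarrow> (nat \<Rightarrow> 'a) \<Rightarrow> (nat \<Rightarrow> 'a) set" where
  "Dset n a b = {ehat a b I | I. I \<subseteq> {1..n}}"

end

theory Submission
  imports Defs
begin

lemma lp_mono: "p \<in> lattice_poly n \<Longrightarrow> (\<forall>i\<in>{1..n}. x i \<le> y i) \<Longrightarrow> p x \<le> p y"
proof (induction p rule: lattice_poly.induct)
  case (proj i) then show ?case by blast
next
  case (const d) show ?case by simp
next
  case (inf p q) then show ?case by (intro inf_mono) blast+
next
  case (sup p q) then show ?case by (intro sup_mono) blast+
qed

lemma lp_low: "p \<in> lattice_poly n \<Longrightarrow> (\<forall>i\<in>{1..n}. i \<noteq> k \<longrightarrow> x i = y i) \<Longrightarrow> c \<le> x k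
  \<Longrightarrow> inf (p y) c \<le> p x"
proof (induction p rule: lattice_poly.induct)
  case (proj i) show ?case
  proof (cases "i = k")
    case True then show ?thesis using proj.prems(2) by (intro le_infI2) simp
  next
    case False then have "x i = y i" using proj by blast
    then show ?thesis by (intro le_infI1) simp
  qed
next
  case (const d) show ?case by simp
next
  case (inf p q)
  have "inf (inf (p y) (q y)) c = inf (inf (p y) c) (inf (q y) c)" by (simp add: inf.assoc inf.commute inf.left_commute)
  also have "\<dots> \<le> inf (p x) (q x)" using inf by (intro inf_mono) blast+
  finally show ?case .
next
  case (sup p q)
  have "inf (sup (p y) (q y)) c = sup (inf (p y) c) (inf (q y) c)" by (rule inf_sup_distrib2)
  also have "\<dots> \<le> sup (p x) (q x)" using sup by (intro sup_mono) blast+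
  finally show ?case .
qed

lemma lp_up: "p \<in> lattice_poly n \<Longrightarrow> (\<forall>i\<in>{1..n}. i \<noteq> k \<longrightarrow> x i = y i) \<Longrightarrow> x k \<le> c
  \<Longrightarrow> p x \<le> sup (p y) c"
proof (induction p rule: lattice_poly.induct)
  case (proj i) show ?case
  proof (cases "i = k")
    case True then show ?thesis using proj.prems(2) by (intro le_supI2) simp
  next
    case False then have "x i = y i" using proj by blast
    then show ?thesis by (intro le_supI1) simp
  qed
next
  case (const d) show ?case by simp
next
  case (sup p q)
  have "sup (p x) (q x) \<le> sup (sup (p y) c) (sup (q y) c)" using sup by (intro sup_mono) blast+
  also have "\<dots> = sup (sup (p y) (q y)) c" by (simp add: sup.assoc sup.commute sup.left_commute)
  finally show ?case .
next
  case (inf p q)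
  have "inf (p x) (q x) \<le> inf (sup (p y) c) (sup (q y) c)" using inf by (intro inf_mono) blast+
  also have "\<dots> = sup (inf (p y) (q y)) c" by (rule sup_inf_distrib2[symmetric])
  finally show ?case .
qed

theorem lemma3p2:
  fixes n :: nat and a b :: "nat \<Rightarrow> 'a::distrib_lattice"
    and f :: "(nat \<Rightarrow> 'a) \<Rightarrow> 'a"
  assumes "n \<ge> 1"
    and "\<And>i. i \<in> {1..n} \<Longrightarrow> a i < b i"
    and "\<exists>p \<in> lattice_poly n. \<forall>x \<in> Dset n a b. p x = f x"
  shows "(\<forall>I J. I \<subseteq> J \<and> J \<subseteq> {1..n} \<longrightarrow> f (ehat a b I) \<le> f (ehat a b J))
    \<and> (\<forall>I k. I \<subseteq> {1..n} \<and> k \<in> {1..n} \<longrightarrow>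
         inf (f (ehat a b (I \<union> {k}))) (a k) \<le> f (ehat a b I)
       \<and> f (ehat a b I) \<le> sup (f (ehat a b (I - {k}))) (b k))"
proof -
  obtain p where p: "p \<in> lattice_poly n" and pf: "\<And>x. x \<in> Dset n a b \<Longrightarrow> p x = f x"
    using assms(3) by blast
  have D: "f (ehat a b I) = p (ehat a b I)" if "I \<subseteq> {1..n}" for I
  proof -
    have "ehat a b I \<in> Dset n a b" unfolding Dset_def using that by blast
    then show ?thesis using pf by simp
  qed
  have le: "a i \<le> b i" if "i \<in> {1..n}" for i using assms(2)[OF that] by (rule less_imp_le)
  have 1: "f (ehat a b I) \<le> f (ehat a b J)" if "I \<subseteq> J" "J \<subseteq> {1..n}" for I J
  proof -
    have "\<forall>i\<in>{1..n}. ehat a b I i \<le> ehat a b J i"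
      using that le unfolding ehat_def by auto
    then have "p (ehat a b I) \<le> p (ehat a b J)" by (rule lp_mono[OF p])
    then show ?thesis using D that by (metis order_trans)
  qed
  have 2: "inf (f (ehat a b (I \<union> {k}))) (a k) \<le> f (ehat a b I)
       \<and> f (ehat a b I) \<le> sup (f (ehat a b (I - {k}))) (b k)" if "I \<subseteq> {1..n}" "k \<in> {1..n}" for I k
  proof
    have e1: "\<forall>i\<in>{1..n}. i \<noteq> k \<longrightarrow> ehat a b I i = ehat a b (I \<union> {k}) i"
      unfolding ehat_def by simp
    have c1: "a k \<le> ehat a b I k" using le[OF that(2)] unfolding ehat_def by simp
    have "inf (p (ehat a b (I \<union> {k}))) (a k) \<le> p (ehat a b I)" by (rule lp_low[OF p e1 c1])
    moreover have "I \<union> {k} \<subseteq> {1..n}" using that by blast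
    ultimately show "inf (f (ehat a b (I \<union> {k}))) (a k) \<le> f (ehat a b I)"
      using D that(1) by simp
    have e2: "\<forall>i\<in>{1..n}. i \<noteq> k \<longrightarrow> ehat a b I i = ehat a b (I - {k}) i"
      unfolding ehat_def by simp
    have c2: "ehat a b I k \<le> b k" using le[OF that(2)] unfolding ehat_def by simp
    have "p (ehat a b I) \<le> sup (p (ehat a b (I - {k}))) (b k)" by (rule lp_up[OF p e2 c2])
    moreover have "I - {k} \<subseteq> {1..n}" using that by blast
    ultimately show "f (ehat a b I) \<le> sup (f (ehat a b (I - {k}))) (b k)"
      using D that(1) by simp
  qed
  show ?thesis using 1 2 by blast
qed

end
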